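(* Let $1\le k<\infty$, and let $T=S_k+F$ on the Hardy space $H^2(\mathbb{D})$, where $S_kz^n=z^{n+k}$ ($n\ge0$) and $F$ is defined by $F(1)=\alpha_0+\alpha_1z+\cdots+\alpha_{k-1}z^{k-1}+(\alpha_k-1)z^k$ and $F(z^n)=0$ for $n\ge1$, with $\alpha_0,\dots,\alpha_k\in\mathbb{C}$ and $0<|\alpha_0|\le1$. Then $T$ is analytic if and only if $\alpha_j\neq0$ for some $1\le j\le k$.
   Context: $H^2(\mathbb{D})$ is the Hardy space with orthonormal basis $\{z^n\}_{n\ge0}$. An operator $T$ on a Hilbert space $\mathcal{H}$ is analytic if $\bigcap_{m\ge1}T^m\mathcal{H}=\{0\}$. *)

theory Defs
  imports "HOL-Analysis.Analysis"
begin

text \<open>The Hardy space H^2(D), identified (isometrically) with its Taylor coefficient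
  sequences w.r.t. the orthonormal basis z^n: f = sum_n f n * z^n.\<close>
definition H2 :: "(nat \<Rightarrow> complex) set" where
  "H2 = {f. summable (\<lambda>n. (cmod (f n))\<^sup>2)}"

definition shift_k :: "nat \<Rightarrow> (nat \<Rightarrow> complex) \<Rightarrow> (nat \<Rightarrow> complex)" where
  "shift_k k f = (\<lambda>n. if k \<le> n then f (n - k) else 0)"

text \<open>F(1) = alpha_0 + ... + alpha_(k-1) z^(k-1) + (alpha_k - 1) z^k, F(z^n) = 0 for n >= 1;
  extended linearly: F f = <f,1> F(1) = f 0 * F(1).\<close>
definition F_op :: "nat \<Rightarrow> (nat \<Rightarrow> complex) \<Rightarrow> (nat \<Rightarrow> complex) \<Rightarrow> (nat \<Rightarrow> complex)" where
  "F_op k \<alpha> f = (\<lambda>n. f 0 * (if n < k then \<alpha> n else if n = k then \<alpha> k - 1 else 0))"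

definition T_op :: "nat \<Rightarrow> (nat \<Rightarrow> complex) \<Rightarrow> (nat \<Rightarrow> complex) \<Rightarrow> (nat \<Rightarrow> complex)" where
  "T_op k \<alpha> f = (\<lambda>n. shift_k k f n + F_op k \<alpha> f n)"

definition analytic_op :: "(nat \<Rightarrow> complex) set \<Rightarrow> ((nat \<Rightarrow> complex) \<Rightarrow> (nat \<Rightarrow> complex)) \<Rightarrow> bool" where
  "analytic_op H T \<longleftrightarrow> (\<Inter>m\<in>{1..}. (T ^^ m) ` H) = {(\<lambda>n. 0)}"

end

theory Submission
  imports Defs
begin

lemma T0: "1 \<le> k \<Longrightarrow> T_op k \<alpha> f 0 = f 0 * \<alpha> 0"
  by (simp add: T_op_def shift_k_def F_op_def)

lemma Tj: "1 \<le> j \<Longrightarrow> j \<le> k \<Longrightarrow> T_op k \<alpha> f j = f 0 * \<alpha> j"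
  by (cases "j = k") (auto simp: T_op_def shift_k_def F_op_def algebra_simps)

lemma Tbig: "1 \<le> n \<Longrightarrow> T_op k \<alpha> f (k + n) = f n"
  by (simp add: T_op_def shift_k_def F_op_def)

lemma T_H2: assumes "f \<in> H2" shows "T_op k \<alpha> f \<in> H2"
proof -
  have "summable (\<lambda>n. (cmod (f n))\<^sup>2)" using assms by (simp add: H2_def)
  then have "summable (\<lambda>n. (cmod (f (Suc n)))\<^sup>2)"
    using summable_iff_shift[of "\<lambda>n. (cmod (f n))\<^sup>2" 1] by simp
  moreover have "(\<lambda>n. (cmod (T_op k \<alpha> f (n + Suc k)))\<^sup>2) = (\<lambda>n. (cmod (f (Suc n)))\<^sup>2)"
    using Tbig[of "Suc _" k \<alpha> f] by (auto simp: add.commute)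
  ultimately have "summable (\<lambda>n. (cmod (T_op k \<alpha> f (n + Suc k)))\<^sup>2)" by simp
  then show ?thesis
    unfolding H2_def using summable_iff_shift[of "\<lambda>n. (cmod (T_op k \<alpha> f n))\<^sup>2" "Suc k"] by simp
qed

lemma Tpow_H2: "f \<in> H2 \<Longrightarrow> (T_op k \<alpha> ^^ m) f \<in> H2"
  by (induction m) (auto intro: T_H2)

lemma T_zero: "T_op k \<alpha> (\<lambda>n. 0) = (\<lambda>n. 0)"
  by (auto simp: T_op_def shift_k_def F_op_def)

lemma Tpow_zero: "(T_op k \<alpha> ^^ m) (\<lambda>n. 0) = (\<lambda>n. 0)"
  by (induction m) (auto simp: T_zero)

lemma key:
  assumes "1 \<le> k" "1 \<le> j" "j \<le> k"
  shows "\<forall>f. ((T_op k \<alpha> ^^ Suc i) f) (i*k+j) * \<alpha> 0 ^ Suc i = ((T_op k \<alpha> ^^ Suc i) f) 0 * \<alpha> j"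
proof (induction i)
  case 0
  then show ?case using assms by (simp add: T0 Tj)
next
  case (Suc i)
  show ?case
  proof
    fix f
    define h where "h = (T_op k \<alpha> ^^ Suc i) f"
    have g: "(T_op k \<alpha> ^^ Suc (Suc i)) f = T_op k \<alpha> h" by (simp add: h_def)
    have "T_op k \<alpha> h (Suc i * k + j) = h (i*k+j)"
      using Tbig[of "i*k+j" k \<alpha> h] assms by (simp add: algebra_simps)
    moreover have "h (i*k+j) * \<alpha> 0 ^ Suc i = h 0 * \<alpha> j" using Suc h_def by blast
    moreover have "T_op k \<alpha> h 0 = h 0 * \<alpha> 0" using T0 assms by blast
    ultimately show "((T_op k \<alpha> ^^ Suc (Suc i)) f) (Suc i*k+j) * \<alpha> 0 ^ Suc (Suc i)
        = ((T_op k \<alpha> ^^ Suc (Suc i)) f) 0 * \<alpha> j"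
      unfolding g by (metis mult.assoc mult.commute power_Suc)
  qed
qed

lemma e0_pow:
  assumes "1 \<le> k" "\<forall>j\<in>{1..k}. \<alpha> j = 0"
  shows "\<forall>c. (T_op k \<alpha> ^^ m) (\<lambda>n. if n = 0 then c else 0) = (\<lambda>n. if n = 0 then c * \<alpha> 0 ^ m else 0)"
proof (induction m)
  case 0
  then show ?case by (simp add: fun_eq_iff)
next
  case (Suc m)
  have T1: "T_op k \<alpha> (\<lambda>n. if n = 0 then c else 0) = (\<lambda>n. if n = 0 then c * \<alpha> 0 else 0)" for c
  proof
    fix n
    show "T_op k \<alpha> (\<lambda>n. if n = 0 then c else 0) n = (if n = 0 then c * \<alpha> 0 else 0)"
      using assms by (cases "n = 0"; cases "n \<le> k") (auto simp: T_op_def shift_k_def F_op_def)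
  qed
  show ?case
  proof
    fix c
    have "(T_op k \<alpha> ^^ Suc m) (\<lambda>n. if n = 0 then c else 0)
        = (T_op k \<alpha> ^^ m) (T_op k \<alpha> (\<lambda>n. if n = 0 then c else 0))"
      by (simp only: funpow_Suc_right o_apply)
    also have "\<dots> = (T_op k \<alpha> ^^ m) (\<lambda>n. if n = 0 then c * \<alpha> 0 else 0)"
      by (simp only: T1)
    also have "\<dots> = (\<lambda>n. if n = 0 then c * \<alpha> 0 * \<alpha> 0 ^ m else 0)"
      using Suc by blast
    also have "\<dots> = (\<lambda>n. if n = 0 then c * \<alpha> 0 ^ Suc m else 0)"
      by (simp only: power_Suc mult.assoc)
    finally show "(T_op k \<alpha> ^^ Suc m) (\<lambda>n. if n = 0 then c else 0) = (\<lambda>n. if n = 0 then c * \<alpha> 0 ^ Suc m else 0)" .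
  qed
qed

lemma single_H2: "(\<lambda>n. if n = 0 then a else 0) \<in> H2"
proof -
  have e: "(\<lambda>n. (cmod (if n = 0 then a else 0))^2) = (\<lambda>n. if n = 0 then (cmod a)^2 else 0)"
    by (auto simp: fun_eq_iff)
  have "summable (\<lambda>n. if n = 0 then (cmod a)^2 else 0)"
    using sums_single[of 0 "\<lambda>_. (cmod a)^2"] sums_summable by blast
  then have "summable (\<lambda>n. (cmod (if n = 0 then a else 0))^2)" unfolding e .
  then show ?thesis unfolding H2_def by blast
qed

theorem corollary4p5:
  fixes k :: nat and \<alpha> :: "nat \<Rightarrow> complex"
  assumes "1 \<le> k"
    and "0 < cmod (\<alpha> 0)" and "cmod (\<alpha> 0) \<le> 1"
  shows "analytic_op H2 (T_op k \<alpha>) \<longleftrightarrow> (\<exists>j\<in>{1..k}. \<alpha> j \<noteq> 0)"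
proof
  assume an: "analytic_op H2 (T_op k \<alpha>)"
  show "\<exists>j\<in>{1..k}. \<alpha> j \<noteq> 0"
  proof (rule ccontr)
    assume "\<not> ?thesis"
    then have z: "\<forall>j\<in>{1..k}. \<alpha> j = 0" by blast
    have a0: "\<alpha> 0 \<noteq> 0" using assms by auto
    have "(\<lambda>n. if n = 0 then (1::complex) else 0) \<in> (T_op k \<alpha> ^^ m) ` H2" for m
    proof
      show "(\<lambda>n. if n = 0 then (1::complex) else 0) = (T_op k \<alpha> ^^ m) (\<lambda>n. if n = 0 then 1 / \<alpha> 0 ^ m else 0)"
      proof -
        have "(T_op k \<alpha> ^^ m) (\<lambda>n. if n = 0 then 1 / \<alpha> 0 ^ m else 0)
            = (\<lambda>n. if n = 0 then 1 / \<alpha> 0 ^ m * \<alpha> 0 ^ m else 0)"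
          using e0_pow[OF assms(1) z, of m] by blast
        also have "\<dots> = (\<lambda>n. if n = 0 then 1 else 0)"
        proof -
          have "1 / \<alpha> 0 ^ m * \<alpha> 0 ^ m = 1" using a0 by simp
          then show ?thesis by (simp only:)
        qed
        finally show ?thesis by (rule sym)
      qed
      show "(\<lambda>n. if n = 0 then 1 / \<alpha> 0 ^ m else 0) \<in> H2" by (rule single_H2)
    qed
    then have mem: "(\<lambda>n. if n = 0 then (1::complex) else 0) \<in> (\<Inter>m\<in>{1..}. (T_op k \<alpha> ^^ m) ` H2)"
      by blast
    have eq: "(\<Inter>m\<in>{1..}. (T_op k \<alpha> ^^ m) ` H2) = {\<lambda>n. 0}"
      using an unfolding analytic_op_def .
    have "(\<lambda>n::nat. if n = 0 then (1::complex) else 0) \<in> {\<lambda>n::nat. 0::complex}" using mem unfolding eq .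
    then have "(\<lambda>n::nat. if n = 0 then (1::complex) else 0) = (\<lambda>n. 0)" by (rule singletonD)
    from fun_cong[OF this, of 0] show False by simp
  qed
next
  assume "\<exists>j\<in>{1..k}. \<alpha> j \<noteq> 0"
  then obtain j0 where j0: "1 \<le> j0" "j0 \<le> k" "\<alpha> j0 \<noteq> 0" by auto
  show "analytic_op H2 (T_op k \<alpha>)"
    unfolding analytic_op_def
  proof
    show "{\<lambda>n. 0} \<subseteq> (\<Inter>m\<in>{1..}. (T_op k \<alpha> ^^ m) ` H2)"
    proof -
      have "(\<lambda>n. 0::complex) \<in> H2" by (simp add: H2_def)
      then show ?thesis using Tpow_zero[where k=k and \<alpha>=\<alpha>] by (auto intro!: image_eqI[where x="\<lambda>n. 0"])
    qed
  next
    show "(\<Inter>m\<in>{1..}. (T_op k \<alpha> ^^ m) ` H2) \<subseteq> {\<lambda>n. 0}"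
    proof
      fix g assume g: "g \<in> (\<Inter>m\<in>{1..}. (T_op k \<alpha> ^^ m) ` H2)"
      have rel: "g (i*k+j) * \<alpha> 0 ^ Suc i = g 0 * \<alpha> j" if "1 \<le> j" "j \<le> k" for i j
      proof -
        have "Suc i \<in> {1..}" by simp
        then have "g \<in> (T_op k \<alpha> ^^ Suc i) ` H2" using g by blast
        then obtain f where "g = (T_op k \<alpha> ^^ Suc i) f" by blast
        then show ?thesis using key[OF assms(1) that, where \<alpha>=\<alpha> and i=i] by blast
      qed
      have gH: "g \<in> H2"
      proof -
        have "g \<in> (T_op k \<alpha> ^^ 1) ` H2" using g by blast
        then obtain f where "f \<in> H2" "g = (T_op k \<alpha> ^^ 1) f" by blast
        then show ?thesis using Tpow_H2 by blast
      qed
      then have "(\<lambda>n. (cmod (g n))\<^sup>2) \<longlonglongrightarrow> 0" unfolding H2_def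
        using summable_LIMSEQ_zero by blast
      then have "(\<lambda>n. cmod (g n)) \<longlonglongrightarrow> 0"
        using tendsto_real_sqrt[of "\<lambda>n. (cmod (g n))\<^sup>2" 0 sequentially] by simp
      moreover have "strict_mono (\<lambda>i. i*k+j0)"
        using assms(1) by (auto simp: strict_mono_def)
      ultimately have lim: "(\<lambda>i. cmod (g (i*k+j0))) \<longlonglongrightarrow> 0"
        using LIMSEQ_subseq_LIMSEQ[of "\<lambda>n. cmod (g n)" 0 "\<lambda>i. i*k+j0"] by (simp add: o_def)
      have lb: "cmod (g 0) * cmod (\<alpha> j0) \<le> cmod (g (i*k+j0))" for i
      proof -
        have "cmod (g 0) * cmod (\<alpha> j0) = cmod (g (i*k+j0)) * cmod (\<alpha> 0) ^ Suc i"
        proof -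
          have "cmod (g 0 * \<alpha> j0) = cmod (g (i*k+j0) * \<alpha> 0 ^ Suc i)"
            using rel[OF j0(1,2), of i] by simp
          then show ?thesis by (simp only: norm_mult norm_power)
        qed
        also have "\<dots> \<le> cmod (g (i*k+j0)) * 1"
        proof -
          have "cmod (\<alpha> 0) ^ Suc i \<le> 1" using assms(2,3) by (intro power_le_one) auto
          then show ?thesis by (rule mult_left_mono) simp
        qed
        finally show ?thesis by simp
      qed
      have "cmod (g 0) * cmod (\<alpha> j0) \<le> 0"
        using lim lb by (intro LIMSEQ_le_const) auto
      then have g0: "g 0 = 0" using j0(3)
      proof -
        have "0 < cmod (\<alpha> j0)" using j0(3) by simp
        then have "cmod (g 0) \<le> 0" using \<open>cmod (g 0) * cmod (\<alpha> j0) \<le> 0\<close>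
          by (simp add: mult_le_0_iff)
        then show ?thesis by simp
      qed
      have "g n = 0" for n
      proof (cases "n = 0")
        case True then show ?thesis using g0 by simp
      next
        case False
        define i where "i = (n - 1) div k"
        define j where "j = (n - 1) mod k + 1"
        have n: "n = i*k+j" using False unfolding i_def j_def
          using div_mult_mod_eq[of "n - 1" k] by linarith
        have "1 \<le> j" "j \<le> k" using assms(1) unfolding j_def
          by (auto simp: Suc_le_eq)
        from rel[OF this, of i] g0 assms(2) have "g (i*k+j) = 0" by auto
        then show ?thesis using n by simp
      qed
      then show "g \<in> {\<lambda>n. 0}" by auto
    qed
  qed
qed

end
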